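(* Let $(X,d_X)$ and $(Y,d_Y)$ be metric spaces. Every distance-increasing, partial distance-preserving metric $d$ on $X\times Y$ induces the product topology on $X\times Y$.
   Context: A metric $d$ on $X\times Y$ is distance-increasing if $d((x_1,y_1),(x_2,y_2))\le d((x_3,y_3),(x_4,y_4))$ whenever $d_X(x_1,x_2)\le d_X(x_3,x_4)$ and $d_Y(y_1,y_2)\le d_Y(y_3,y_4)$; it is partial distance-preserving if $d((x_1,y),(x_2,y))=d_X(x_1,x_2)$ and $d((x,y_1),(x,y_2))=d_Y(y_1,y_2)$ for all $x,x_1,x_2\in X$, $y,y_1,y_2\in Y$. *)

theory Defs
  imports "HOL-Analysis.Analysis"
begin

definition distance_increasing ::
  "'a set \<Rightarrow> ('a \<Rightarrow> 'a \<Rightarrow> real) \<Rightarrow> 'b set \<Rightarrow> ('b \<Rightarrow> 'b \<Rightarrow> real)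
   \<Rightarrow> ('a \<times> 'b \<Rightarrow> 'a \<times> 'b \<Rightarrow> real) \<Rightarrow> bool" where
  "distance_increasing X dX Y dY d \<longleftrightarrow>
    (\<forall>x1\<in>X. \<forall>x2\<in>X. \<forall>x3\<in>X. \<forall>x4\<in>X. \<forall>y1\<in>Y. \<forall>y2\<in>Y. \<forall>y3\<in>Y. \<forall>y4\<in>Y.
       dX x1 x2 \<le> dX x3 x4 \<and> dY y1 y2 \<le> dY y3 y4 \<longrightarrow>
       d (x1, y1) (x2, y2) \<le> d (x3, y3) (x4, y4))"

definition partial_distance_preserving ::
  "'a set \<Rightarrow> ('a \<Rightarrow> 'a \<Rightarrow> real) \<Rightarrow> 'b set \<Rightarrow> ('b \<Rightarrow> 'b \<Rightarrow> real)
   \<Rightarrow> ('a \<times> 'b \<Rightarrow> 'a \<times> 'b \<Rightarrow> real) \<Rightarrow> bool" where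
  "partial_distance_preserving X dX Y dY d \<longleftrightarrow>
    (\<forall>x1\<in>X. \<forall>x2\<in>X. \<forall>y\<in>Y. d (x1, y) (x2, y) = dX x1 x2) \<and>
    (\<forall>x\<in>X. \<forall>y1\<in>Y. \<forall>y2\<in>Y. d (x, y1) (x, y2) = dY y1 y2)"

end

theory Submission
  imports Defs
begin

lemma mtop_sub:
  assumes A: "Metric_space M d1" and B: "Metric_space M d2"
    and le: "\<And>x y. x \<in> M \<Longrightarrow> y \<in> M \<Longrightarrow> d2 x y \<le> 2 * d1 x y"
    and U: "openin (Metric_space.mtopology M d2) U"
  shows "openin (Metric_space.mtopology M d1) U"
proof -
  have U2: "U \<subseteq> M \<and> (\<forall>x. x \<in> U \<longrightarrow> (\<exists>r>0. Metric_space.mball M d2 x r \<subseteq> U))"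
    using U Metric_space.openin_mtopology[OF B] by blast
  have "\<exists>r>0. Metric_space.mball M d1 x r \<subseteq> U" if xU: "x \<in> U" for x
  proof -
    obtain r where r: "r > 0" "Metric_space.mball M d2 x r \<subseteq> U" using U2 xU by blast
    have "Metric_space.mball M d1 x (r/2) \<subseteq> Metric_space.mball M d2 x r"
    proof
      fix y assume "y \<in> Metric_space.mball M d1 x (r/2)"
      hence "x \<in> M" "y \<in> M" "d1 x y < r/2" using Metric_space.in_mball[OF A] by auto
      thus "y \<in> Metric_space.mball M d2 x r" using le[of x y] Metric_space.in_mball[OF B] by auto
    qed
    thus ?thesis using r by (intro exI[of _ "r/2"]) auto
  qed
  thus ?thesis using U2 Metric_space.openin_mtopology[OF A] by blast
qed

lemma mtop_eq:
  assumes A: "Metric_space M d1" and B: "Metric_space M d2"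
    and le1: "\<And>x y. x \<in> M \<Longrightarrow> y \<in> M \<Longrightarrow> d2 x y \<le> 2 * d1 x y"
    and le2: "\<And>x y. x \<in> M \<Longrightarrow> y \<in> M \<Longrightarrow> d1 x y \<le> 2 * d2 x y"
  shows "Metric_space.mtopology M d1 = Metric_space.mtopology M d2"
  unfolding topology_eq using mtop_sub[OF A B le1] mtop_sub[OF B A le2] by blast

theorem corollary3p5:
  fixes X :: "'a set" and dX :: "'a \<Rightarrow> 'a \<Rightarrow> real"
    and Y :: "'b set" and dY :: "'b \<Rightarrow> 'b \<Rightarrow> real"
    and d :: "'a \<times> 'b \<Rightarrow> 'a \<times> 'b \<Rightarrow> real"
  assumes "Metric_space X dX" and "Metric_space Y dY"
    and "Metric_space (X \<times> Y) d"
    and "distance_increasing X dX Y dY d"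
    and "partial_distance_preserving X dX Y dY d"
  shows "Metric_space.mtopology (X \<times> Y) d =
         prod_topology (Metric_space.mtopology X dX) (Metric_space.mtopology Y dY)"
proof -
  interpret M12: Metric_space12 X dX Y dY
    using assms(1,2) by (simp add: Metric_space12_def)
  interpret D: Metric_space "X \<times> Y" d by (rule assms(3))
  have key: "max (dX x1 x2) (dY y1 y2) \<le> d (x1,y1) (x2,y2) \<and> d (x1,y1) (x2,y2) \<le> dX x1 x2 + dY y1 y2"
    if "x1 \<in> X" "x2 \<in> X" "y1 \<in> Y" "y2 \<in> Y" for x1 x2 y1 y2
  proof -
    have p1: "d (x1,y2) (x2,y2) = dX x1 x2" "d (x2,y1) (x2,y2) = dY y1 y2"
         "d (x1,y1) (x2,y1) = dX x1 x2" "d (x1,y1) (x1,y2) = dY y1 y2"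
      using assms(5) that unfolding partial_distance_preserving_def by auto
    have "d (x1,y2) (x2,y2) \<le> d (x1,y1) (x2,y2)"
      using assms(4) that M12.M2.nonneg[of y1 y2] M12.M2.mdist_zero[of y2]
      unfolding distance_increasing_def by (metis order_refl)
    moreover have "d (x2,y1) (x2,y2) \<le> d (x1,y1) (x2,y2)"
      using assms(4) that M12.M1.nonneg[of x1 x2] M12.M1.mdist_zero[of x2]
      unfolding distance_increasing_def by (metis order_refl)
    moreover have "d (x1,y1) (x2,y2) \<le> d (x1,y1) (x2,y1) + d (x2,y1) (x2,y2)"
      using D.triangle that by auto
    ultimately show ?thesis using p1 by auto
  qed
  have "Metric_space.mtopology (X \<times> Y) d = M12.Prod_metric.mtopology"
  proof (rule mtop_eq[OF assms(3) M12.prod_metric])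
    fix p q assume p: "p \<in> X \<times> Y" and q: "q \<in> X \<times> Y"
    obtain x1 y1 x2 y2 where e: "p = (x1,y1)" "q = (x2,y2)" by (cases p, cases q) auto
    have m: "x1 \<in> X" "x2 \<in> X" "y1 \<in> Y" "y2 \<in> Y" using p q e by auto
    note k = key[OF m]
    have a: "dX x1 x2 \<le> prod_dist dX dY (x1,y1) (x2,y2)" "dY y1 y2 \<le> prod_dist dX dY (x1,y1) (x2,y2)"
      by (rule M12.component_le_prod_metric)+
    have b: "prod_dist dX dY (x1,y1) (x2,y2) \<le> dX x1 x2 + dY y1 y2"
      using M12.prod_metric_le_components m by blast
    show "prod_dist dX dY p q \<le> 2 * d p q" using a b k e by auto
    show "d p q \<le> 2 * prod_dist dX dY p q" using a b k e by auto
  qed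
  thus ?thesis using M12.mtopology_prod_metric by simp
qed

end
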